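(* For every composition $I=(i_1,\dots,i_r)$, \[ \mathrm{PT}^A_{(1,i_1,i_2,\dots,i_r)}(q)=\mathrm{PT}^A_I(q), \qquad \mathrm{PT}^A_{(1+i_1,i_2,\dots,i_r)}(q)=[r]_q\,\mathrm{PT}^A_I(q)+\sum_{k=1}^{r-1}q^{k-1}\,\mathrm{PT}^A_{(i_1,\dots,i_{k-1},i_k+i_{k+1},i_{k+2},\dots,i_r)}(q). \]
   Context: $[m]_q=1+q+\dots+q^{m-1}$. Let $k\ge1$ and let $\lambda$ be a Young diagram with exactly $k$ rows (rows of length $0$ allowed) and exactly $n-k$ nonempty columns, drawn in French convention (rows left-justified, longest row at the bottom). Encode $\lambda$ by the composition $I=(i_1,\dots,i_k)$ of $n$ where, for $1\le t\le k$, $i_t-1$ is the number of columns of length $k-t+1$ (a bijection onto compositions of $n$ with $k$ parts). A (type A) permutation tableau of shape $\lambda$ is a filling of the boxes with $0$'s and $1$'s such that (1) every column contains at least one $1$, and (2) no box containing a $0$ has both a $1$ below it in the same column and a $1$ to its left in the same row. Its rank is (number of $1$'s) minus (number of columns). $\mathrm{PT}^A_I(q)=\sum_T q^{\mathrm{rank}(T)}$ over permutation tableaux $T$ of the shape encoded by $I$. *)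

theory Defs
  imports "HOL-Computational_Algebra.Polynomial"
begin

definition is_composition :: "nat list \<Rightarrow> bool" where
  "is_composition I \<longleftrightarrow> I \<noteq> [] \<and> (\<forall>x\<in>set I. 0 < x)"

text \<open>Column lengths of the diagram encoded by I (k = length I), from left to right:
  for t = 1..k (0-based t-1 below), there are i_t - 1 columns of length k - t + 1.
  In French convention the left columns are the longest.\<close>
definition colLens :: "nat list \<Rightarrow> nat list" where
  "colLens I = concat (map (\<lambda>t. replicate (I ! t - 1) (length I - t)) [0..<length I])"

definition ncols :: "nat list \<Rightarrow> nat" where
  "ncols I = length (colLens I)"

text \<open>Boxes as pairs (row, column), 0-based; row 0 is the bottom row, column 0 the leftmost.\<close>
definition boxes :: "nat list \<Rightarrow> (nat \<times> nat) set" where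
  "boxes I = {(r, c). c < ncols I \<and> r < colLens I ! c}"

text \<open>A filling is represented by the set S of boxes containing a 1.\<close>
definition perm_tableau :: "nat list \<Rightarrow> (nat \<times> nat) set \<Rightarrow> bool" where
  "perm_tableau I S \<longleftrightarrow>
     S \<subseteq> boxes I \<and>
     (\<forall>c < ncols I. \<exists>r. (r, c) \<in> S) \<and>
     (\<forall>r c. (r, c) \<in> boxes I \<and> (r, c) \<notin> S \<longrightarrow>
        \<not> ((\<exists>r' < r. (r', c) \<in> S) \<and> (\<exists>c' < c. (r, c') \<in> S)))"

definition tableaux :: "nat list \<Rightarrow> (nat \<times> nat) set set" where
  "tableaux I = {S. perm_tableau I S}"

definition tab_rank :: "nat list \<Rightarrow> (nat \<times> nat) set \<Rightarrow> nat" where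
  "tab_rank I S = card S - ncols I"

definition PT :: "nat list \<Rightarrow> int poly" where
  "PT I = (\<Sum>S\<in>tableaux I. monom 1 (tab_rank I S))"

definition qint :: "nat \<Rightarrow> int poly" where
  "qint m = (\<Sum>j<m. monom 1 j)"

text \<open>Merge parts k and k+1 (1-based k) of I.\<close>
definition merge_at :: "nat list \<Rightarrow> nat \<Rightarrow> nat list" where
  "merge_at I k = take (k - 1) I @ [I ! (k - 1) + I ! k] @ drop (k + 1) I"

end

theory Submission
  imports Defs
begin

definition X :: "int poly poly" where "X = monom 1 1"
definition Qc :: "int poly" where "Qc = monom 1 1"

fun phi :: "nat \<Rightarrow> int poly poly" where
  "phi 0 = 0"
| "phi (Suc a) = (1 + smult Qc X) * phi a + X ^ Suc a"

definition Phi :: "int poly poly \<Rightarrow> int poly poly" where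
  "Phi p = (\<Sum>a\<le>degree p. smult (coeff p a) (phi a))"

lemma X_pow: "X ^ n = monom 1 n"
  by (simp add: X_def monom_power)

lemma smult_sum_right: "smult c (sum f A) = (\<Sum>a\<in>A. smult c (f a))"
  by (induction A rule: infinite_finite_induct) (auto simp: smult_add_right)

lemma Phi_bound:
  assumes "degree p < n"
  shows "Phi p = (\<Sum>a<n. smult (coeff p a) (phi a))"
proof -
  have "(\<Sum>a<n. smult (coeff p a) (phi a)) = (\<Sum>a\<le>degree p. smult (coeff p a) (phi a))"
    using assms by (intro sum.mono_neutral_right) (auto simp: coeff_eq_0)
  then show ?thesis by (simp add: Phi_def)
qed

lemma Phi_add: "Phi (p + q) = Phi p + Phi q"
proof -
  let ?n = "Suc (max (degree p) (degree q))"
  have "degree (p+q) < ?n" using degree_add_le_max[of p q] by linarith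
  then have "Phi (p+q) = (\<Sum>a<?n. smult (coeff (p+q) a) (phi a))" by (rule Phi_bound)
  also have "\<dots> = (\<Sum>a<?n. smult (coeff p a) (phi a)) + (\<Sum>a<?n. smult (coeff q a) (phi a))"
    by (simp add: smult_add_left sum.distrib)
  also have "\<dots> = Phi p + Phi q"
    by (subst (1 2) Phi_bound[symmetric]) auto
  finally show ?thesis .
qed

lemma Phi_0[simp]: "Phi 0 = 0" by (simp add: Phi_def)

lemma Phi_smult: "Phi (smult c p) = smult c (Phi p)"
proof -
  have "degree (smult c p) < Suc (degree p)" using degree_smult_le[of c p] by linarith
  then have "Phi (smult c p) = (\<Sum>a<Suc (degree p). smult (coeff (smult c p) a) (phi a))" by (rule Phi_bound)
  also have "\<dots> = smult c (\<Sum>a<Suc (degree p). smult (coeff p a) (phi a))"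
    by (simp add: smult_sum_right smult_smult del: sum.lessThan_Suc)
  also have "\<dots> = smult c (Phi p)" by (subst Phi_bound[symmetric]) auto
  finally show ?thesis .
qed

lemma Phi_sum: "Phi (sum f A) = (\<Sum>a\<in>A. Phi (f a))"
  by (induction A rule: infinite_finite_induct) (auto simp: Phi_add)

lemma Phi_Xpow: "Phi (X ^ a) = phi a"
proof -
  have "Phi (X ^ a) = (\<Sum>aa\<le>a. if aa = a then phi aa else 0)"
    unfolding Phi_def X_pow by (intro sum.cong) (auto simp: degree_monom_eq coeff_monom)
  then show ?thesis by simp
qed

lemma Phi_1[simp]: "Phi 1 = 0"
  using Phi_Xpow[of 0] by simp

lemma Phi_X: "Phi (X * p) = (1 + smult Qc X) * Phi p + X * p"
proof -
  let ?n = "Suc (degree p)"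
  have Xp: "X * p = pCons 0 p" by (simp add: X_def monom_Suc)
  have "degree (X * p) < Suc ?n" unfolding Xp using degree_pCons_le[of 0 p] by linarith
  then have "Phi (X*p) = (\<Sum>a<Suc ?n. smult (coeff (pCons 0 p) a) (phi a))"
    unfolding Xp by (rule Phi_bound)
  also have "\<dots> = (\<Sum>a<?n. smult (coeff p a) (phi (Suc a)))"
    by (subst sum.lessThan_Suc_shift) simp
  also have "\<dots> = (\<Sum>a<?n. (1 + smult Qc X) * smult (coeff p a) (phi a) + X * smult (coeff p a) (X ^ a))"
    by (intro sum.cong refl) (simp add: smult_add_right)
  also have "\<dots> = (1 + smult Qc X) * (\<Sum>a<?n. smult (coeff p a) (phi a)) + X * (\<Sum>a<?n. smult (coeff p a) (X ^ a))"
    by (simp add: sum.distrib sum_distrib_left del: sum.lessThan_Suc)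
  also have "(\<Sum>a<?n. smult (coeff p a) (X ^ a)) = (\<Sum>a\<le>degree p. monom (coeff p a) a)"
    by (intro sum.cong) (auto simp: X_pow smult_monom)
  also have "\<dots> = p" by (rule poly_as_sum_of_monoms)
  also have "(\<Sum>a<?n. smult (coeff p a) (phi a)) = Phi p" by (rule Phi_bound[symmetric]) simp
  finally show ?thesis .
qed

fun G :: "nat list \<Rightarrow> int poly poly" where
  "G [] = 1"
| "G (i#J) = (Phi ^^ (i-1)) (X * G J)"

lemma Phin_add: "(Phi^^m) (p+q) = (Phi^^m) p + (Phi^^m) q"
  by (induction m) (auto simp: Phi_add)
lemma Phin_smult: "(Phi^^m) (smult c p) = smult c ((Phi^^m) p)"
  by (induction m) (auto simp: Phi_smult)
lemma Phin_0[simp]: "(Phi^^m) 0 = 0"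
  by (induction m) auto
lemma Phin_sum: "(Phi^^m) (sum f A) = (\<Sum>a\<in>A. (Phi^^m) (f a))"
  by (induction A rule: infinite_finite_induct) (auto simp: Phin_add)

lemma merge_Cons: "1 \<le> k \<Longrightarrow> merge_at (i#J) (Suc k) = i # merge_at J k"
  by (cases k) (auto simp: merge_at_def)

lemma merge_1: "merge_at (i#j#J) 1 = (i+j)#J"
  by (simp add: merge_at_def)

lemma Qc_monom: "Qc * monom 1 k = monom 1 (Suc k)"
  by (simp add: Qc_def mult_monom)

lemma smult_monom10: "smult (monom (1::int) 0) (p::int poly poly) = p"
  by (simp only: monom_eq_1 smult_1_left)

lemma qint_Suc: "qint (Suc r) = 1 + Qc * qint r"
proof -
  have "qint (Suc r) = monom 1 0 + (\<Sum>j<r. monom 1 (Suc j))"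
    unfolding qint_def by (subst sum.lessThan_Suc_shift) simp
  also have "(\<Sum>j<r. monom 1 (Suc j)) = Qc * qint r"
    by (simp add: qint_def sum_distrib_left Qc_monom)
  finally show ?thesis by (simp add: one_pCons)
qed

lemma main_alg:
  "\<forall>x\<in>set I. 0 < x \<Longrightarrow> Phi (G I) = smult (qint (length I)) (G I)
      + (\<Sum>k\<in>{1..<length I}. smult (monom 1 (k-1)) (G (merge_at I k)))"
proof (induction I)
  case Nil
  then show ?case by (simp add: qint_def)
next
  case (Cons i J)
  let ?n = "length J"
  have i1: "i \<ge> 1" using Cons.prems by auto
  have IH: "Phi (G J) = smult (qint ?n) (G J)
      + (\<Sum>k\<in>{1..<?n}. smult (monom 1 (k-1)) (G (merge_at J k)))"
    using Cons by auto
  have "Phi (G (i#J)) = (Phi^^(i-1)) (Phi (X * G J))"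
    by (simp add: funpow_swap1)
  also have "\<dots> = (Phi^^(i-1)) (Phi (G J)) + smult Qc ((Phi^^(i-1)) (X * Phi (G J))) + G (i#J)"
    by (simp add: Phi_X Phin_add Phin_smult distrib_right)
  finally have E1: "Phi (G (i#J)) = (Phi^^(i-1)) (Phi (G J)) + smult Qc ((Phi^^(i-1)) (X * Phi (G J))) + G (i#J)" .
  have B: "(Phi^^(i-1)) (X * Phi (G J)) = smult (qint ?n) (G (i#J))
      + (\<Sum>k\<in>{1..<?n}. smult (monom 1 (k-1)) (G (merge_at (i#J) (Suc k))))"
    unfolding IH by (simp add: distrib_left sum_distrib_left Phin_add Phin_smult Phin_sum merge_Cons)
  show ?case
  proof (cases J)
    case Nil
    then show ?thesis using E1 by (simp add: qint_def)
  next
    case (Cons j J')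
    have j1: "j \<ge> 1" using Cons.prems \<open>J = j # J'\<close> by auto
    have A: "(Phi^^(i-1)) (Phi (G J)) = G (merge_at (i#J) 1)"
    proof -
      have "(Phi^^(i-1)) (Phi (G J)) = (Phi^^(i-1+1+(j-1))) (X * G J')"
        using \<open>J = j # J'\<close> by (simp add: funpow_add funpow_swap1)
      also have "i-1+1+(j-1) = i + j - 1" using i1 j1 by simp
      finally show ?thesis using \<open>J = j # J'\<close> merge_1[of i j J'] by simp
    qed
    have n1: "?n \<ge> 1" using \<open>J = j # J'\<close> by simp
    have S: "(\<Sum>k\<in>{1..<Suc ?n}. smult (monom 1 (k-1)) (G (merge_at (i#J) k)))
       = G (merge_at (i#J) 1) + (\<Sum>k\<in>{1..<?n}. smult (monom 1 k) (G (merge_at (i#J) (Suc k))))"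
    proof -
      have "{1..<Suc ?n} = insert 1 {Suc 1..<Suc ?n}" using n1 by auto
      then have "(\<Sum>k\<in>{1..<Suc ?n}. smult (monom 1 (k-1)) (G (merge_at (i#J) k)))
         = smult (monom 1 0) (G (merge_at (i#J) 1)) + (\<Sum>k\<in>{Suc 1..<Suc ?n}. smult (monom 1 (k-1)) (G (merge_at (i#J) k)))"
        by simp
      also have "(\<Sum>k\<in>{Suc 1..<Suc ?n}. smult (monom 1 (k-1)) (G (merge_at (i#J) k)))
          = (\<Sum>k\<in>{1..<?n}. smult (monom 1 k) (G (merge_at (i#J) (Suc k))))"
        by (subst sum.shift_bounds_Suc_ivl) simp
      finally show ?thesis by (simp only: smult_monom10)
    qed
    have C: "smult Qc (\<Sum>k\<in>{1..<?n}. smult (monom 1 (k-1)) (G (merge_at (i#J) (Suc k))))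
       = (\<Sum>k\<in>{1..<?n}. smult (monom 1 k) (G (merge_at (i#J) (Suc k))))"
      by (auto simp: smult_sum_right smult_smult Qc_monom intro!: sum.cong)
    show ?thesis
      unfolding E1 A B S length_Cons qint_Suc
      using C by (simp add: smult_add_right smult_add_left smult_smult algebra_simps)
  qed
qed


section \<open>Combinatorics\<close>

definition boxesL :: "nat list \<Rightarrow> (nat \<times> nat) set" where
  "boxesL cl = {(r, c). c < length cl \<and> r < cl ! c}"

definition ptL :: "nat list \<Rightarrow> (nat \<times> nat) set \<Rightarrow> bool" where
  "ptL cl S \<longleftrightarrow>
     S \<subseteq> boxesL cl \<and>
     (\<forall>c < length cl. \<exists>r. (r, c) \<in> S) \<and>
     (\<forall>r c. (r, c) \<in> boxesL cl \<and> (r, c) \<notin> S \<longrightarrow>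
        \<not> ((\<exists>r' < r. (r', c) \<in> S) \<and> (\<exists>c' < c. (r, c') \<in> S)))"

definition badrow :: "nat list \<Rightarrow> (nat \<times> nat) set \<Rightarrow> nat \<Rightarrow> bool" where
  "badrow cl S r \<longleftrightarrow> (\<exists>c. (r, c) \<in> boxesL cl \<and> (r, c) \<notin> S \<and> (\<exists>r'<r. (r', c) \<in> S))"

definition Aset :: "nat list \<Rightarrow> (nat \<times> nat) set \<Rightarrow> nat \<Rightarrow> nat set" where
  "Aset cl S N = {r. r < N \<and> \<not> badrow cl S r}"

definition Gen :: "nat \<Rightarrow> nat list \<Rightarrow> int poly poly" where
  "Gen N cl = (\<Sum>S\<in>{S. ptL cl S}. smult (Qc ^ (card S - length cl)) (X ^ card (Aset cl S N)))"

lemma finite_boxesL: "finite (boxesL cl)"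
proof -
  have "boxesL cl \<subseteq> {..<sum_list cl} \<times> {..<length cl}"
    by (auto simp: boxesL_def intro: less_le_trans[OF _ elem_le_sum_list])
  then show ?thesis by (rule finite_subset) auto
qed

lemma finite_pt: "finite {S. ptL cl S}"
proof -
  have "{S. ptL cl S} \<subseteq> Pow (boxesL cl)" by (auto simp: ptL_def)
  then show ?thesis using finite_boxesL by (rule finite_subset[OF _ finite_Pow_iff[THEN iffD2]])
qed

lemma ptL_finite: "ptL cl S \<Longrightarrow> finite S"
  using finite_boxesL unfolding ptL_def by (meson finite_subset)

lemma ptL_card: assumes "ptL cl S" shows "length cl \<le> card S"
proof -
  have "{..<length cl} \<subseteq> snd ` S" using assms unfolding ptL_def by force
  then have "card {..<length cl} \<le> card (snd ` S)"
    using ptL_finite[OF assms] by (intro card_mono) auto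
  also have "\<dots> \<le> card S" using ptL_finite[OF assms] by (rule card_image_le)
  finally show ?thesis by simp
qed

lemma phi_alt: "phi (Suc a) = X * (1 + smult Qc X) ^ a + X * phi a"
proof (induction a)
  case 0 then show ?case by simp
next
  case (Suc a)
  have "phi (Suc (Suc a)) = (1 + smult Qc X) * phi (Suc a) + X ^ Suc (Suc a)" by simp
  also have "\<dots> = (1 + smult Qc X) * (X * (1 + smult Qc X) ^ a + X * phi a) + X * X ^ Suc a"
    using Suc by simp
  also have "\<dots> = X * (1 + smult Qc X) ^ Suc a + X * ((1 + smult Qc X) * phi a + X ^ Suc a)"
    by (simp add: algebra_simps)
  finally show ?case by simp
qed

lemma binom_sum:
  assumes "finite B"
  shows "(\<Sum>S\<in>Pow B. smult (Qc ^ card S) (X ^ card S)) = (1 + smult Qc X) ^ card B"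
  using assms
proof (induction B rule: finite_induct)
  case empty then show ?case by simp
next
  case (insert b B)
  have disj: "Pow B \<inter> insert b ` Pow B = {}" using insert by auto
  have inj: "inj_on (insert b) (Pow B)"
    using insert unfolding inj_on_def by (metis Pow_iff insert_absorb insert_ident subset_iff)
  have "(\<Sum>S\<in>Pow (insert b B). smult (Qc ^ card S) (X ^ card S))
      = (\<Sum>S\<in>Pow B. smult (Qc ^ card S) (X ^ card S)) + (\<Sum>S\<in>insert b ` Pow B. smult (Qc ^ card S) (X ^ card S))"
    unfolding Pow_insert using insert disj by (intro sum.union_disjoint) auto
  also have "(\<Sum>S\<in>insert b ` Pow B. smult (Qc ^ card S) (X ^ card S))
      = (\<Sum>S\<in>Pow B. smult (Qc ^ card (insert b S)) (X ^ card (insert b S)))"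
    using inj by (simp add: sum.reindex)
  also have "\<dots> = (\<Sum>S\<in>Pow B. smult Qc X * smult (Qc ^ card S) (X ^ card S))"
  proof (intro sum.cong refl)
    fix S assume "S \<in> Pow B"
    then have "card (insert b S) = Suc (card S)" using insert by (meson PowD card_insert_disjoint finite_subset subsetD)
    then show "smult (Qc ^ card (insert b S)) (X ^ card (insert b S)) = smult Qc X * smult (Qc ^ card S) (X ^ card S)"
      by (simp add: mult.commute)
  qed
  also have "\<dots> = smult Qc X * (\<Sum>S\<in>Pow B. smult (Qc ^ card S) (X ^ card S))"
    by (rule sum_distrib_left[symmetric])
  also have "\<dots> = smult Qc X * (1 + smult Qc X) ^ card B"
    using insert.IH by simp
  finally show ?case using insert by (simp add: algebra_simps)
qed

lemma subset_sum:
  assumes "finite (A::nat set)"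
  shows "(\<Sum>R\<in>{R. R \<noteq> {} \<and> R \<subseteq> A}. smult (Qc ^ (card R - 1)) (X ^ card {a\<in>A. a \<in> R \<or> (\<forall>r\<in>R. a \<le> r)}))
     = phi (card A)"
  using assms
proof (induction "card A" arbitrary: A)
  case 0
  then have "A = {}" by simp
  then show ?case by simp
next
  case (Suc n A)
  let ?f = "\<lambda>A R. smult (Qc ^ (card R - 1)) (X ^ card {a\<in>A. a \<in> R \<or> (\<forall>r\<in>R. (a::nat) \<le> r)})"
  have "A \<noteq> {}" using Suc by auto
  define m where "m = Min A"
  define B where "B = A - {m}"
  have mA: "m \<in> A" using \<open>A \<noteq> {}\<close> Suc.prems unfolding m_def by simp
  have mle: "\<And>a. a \<in> A \<Longrightarrow> m \<le> a" using Suc.prems unfolding m_def by simp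
  have A: "A = insert m B" "m \<notin> B" using mA unfolding B_def by auto
  have fB: "finite B" using Suc.prems unfolding B_def by simp
  have cB: "card B = n" using Suc.hyps(2) A fB by simp
  have IH: "(\<Sum>R\<in>{R. R \<noteq> {} \<and> R \<subseteq> B}. ?f B R) = phi n"
    using Suc.hyps(1)[of B] cB fB by simp
  have split: "{R. R \<noteq> {} \<and> R \<subseteq> A} = insert m ` Pow B \<union> {R. R \<noteq> {} \<and> R \<subseteq> B}"
  proof (intro equalityI subsetI)
    fix R assume "R \<in> {R. R \<noteq> {} \<and> R \<subseteq> A}"
    then show "R \<in> insert m ` Pow B \<union> {R. R \<noteq> {} \<and> R \<subseteq> B}"
    proof (cases "m \<in> R")
      case True
      then have "R = insert m (R - {m})" by auto
      moreover have "R - {m} \<in> Pow B" using \<open>R \<in> _\<close> A by auto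
      ultimately show ?thesis by blast
    qed (use A in auto)
  qed (use A in auto)
  have disj: "insert m ` Pow B \<inter> {R. R \<noteq> {} \<and> R \<subseteq> B} = {}" using A by auto
  have inj: "inj_on (insert m) (Pow B)"
    using A unfolding inj_on_def by (metis Pow_iff insert_absorb insert_ident subset_iff)
  have finPB: "finite {R. R \<noteq> {} \<and> R \<subseteq> B}" using fB by simp
  have "(\<Sum>R\<in>{R. R \<noteq> {} \<and> R \<subseteq> A}. ?f A R)
     = (\<Sum>R\<in>insert m ` Pow B. ?f A R) + (\<Sum>R\<in>{R. R \<noteq> {} \<and> R \<subseteq> B}. ?f A R)"
    unfolding split using fB disj finPB by (intro sum.union_disjoint) auto
  also have "(\<Sum>R\<in>insert m ` Pow B. ?f A R) = (\<Sum>S\<in>Pow B. ?f A (insert m S))"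
    using inj by (simp add: sum.reindex)
  also have "\<dots> = (\<Sum>S\<in>Pow B. X * smult (Qc ^ card S) (X ^ card S))"
  proof (intro sum.cong refl)
    fix S assume S: "S \<in> Pow B"
    have fS: "finite S" using S fB by (meson PowD finite_subset)
    have "m \<notin> S" using S A by auto
    then have cS: "card (insert m S) = Suc (card S)" using fS by simp
    have "{a\<in>A. a \<in> insert m S \<or> (\<forall>r\<in>insert m S. a \<le> r)} = insert m S"
      using S A mle by (auto intro: antisym)
    then show "?f A (insert m S) = X * smult (Qc ^ card S) (X ^ card S)"
      using cS by simp
  qed
  also have "\<dots> = X * (\<Sum>S\<in>Pow B. smult (Qc ^ card S) (X ^ card S))"
    by (rule sum_distrib_left[symmetric])
  also have "\<dots> = X * (1 + smult Qc X) ^ n"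
    using binom_sum[OF fB] cB by simp
  also have "(\<Sum>R\<in>{R. R \<noteq> {} \<and> R \<subseteq> B}. ?f A R) = (\<Sum>R\<in>{R. R \<noteq> {} \<and> R \<subseteq> B}. X * ?f B R)"
  proof (intro sum.cong refl)
    fix R assume R: "R \<in> {R. R \<noteq> {} \<and> R \<subseteq> B}"
    have eq: "{a\<in>A. a \<in> R \<or> (\<forall>r\<in>R. a \<le> r)} = insert m {a\<in>B. a \<in> R \<or> (\<forall>r\<in>R. a \<le> r)}"
      using R A mle by auto
    have "card (insert m {a\<in>B. a \<in> R \<or> (\<forall>r\<in>R. a \<le> r)}) = Suc (card {a\<in>B. a \<in> R \<or> (\<forall>r\<in>R. a \<le> r)})"
      using A fB by (intro card_insert_disjoint) auto
    then show "?f A R = X * ?f B R" unfolding eq by simp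
  qed
  also have "\<dots> = X * (\<Sum>R\<in>{R. R \<noteq> {} \<and> R \<subseteq> B}. ?f B R)"
    by (rule sum_distrib_left[symmetric])
  also have "\<dots> = X * phi n" using IH by simp
  finally show ?case using phi_alt[of n] Suc.hyps(2) by simp
qed


definition build :: "nat set \<Rightarrow> (nat \<times> nat) set \<Rightarrow> (nat \<times> nat) set" where
  "build R T = (\<lambda>r. (r, 0)) ` R \<union> (\<lambda>(r, c). (r, Suc c)) ` T"

lemma build_mem0[simp]: "(r, 0) \<in> build R T \<longleftrightarrow> r \<in> R"
  by (auto simp: build_def)
lemma build_memS[simp]: "(r, Suc c) \<in> build R T \<longleftrightarrow> (r, c) \<in> T"
  by (auto simp: build_def)
lemma boxes_Cons0[simp]: "(r, 0) \<in> boxesL (L#cl) \<longleftrightarrow> r < L"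
  by (simp add: boxesL_def)
lemma boxes_ConsS[simp]: "(r, Suc c) \<in> boxesL (L#cl) \<longleftrightarrow> (r, c) \<in> boxesL cl"
  by (simp add: boxesL_def)

lemma ex_nat_split: "(\<exists>c::nat. P c) \<longleftrightarrow> P 0 \<or> (\<exists>c. P (Suc c))"
  by (metis not0_implies_Suc)
lemma all_nat_split: "(\<forall>c::nat. P c) \<longleftrightarrow> P 0 \<and> (\<forall>c. P (Suc c))"
  by (metis not0_implies_Suc)
lemma all_lessSuc: "(\<forall>c<Suc n. P c) \<longleftrightarrow> P 0 \<and> (\<forall>c<n. P (Suc c))"
  by (auto simp: less_Suc_eq_0_disj)
lemma ex_lessSuc: "(\<exists>c<Suc n. P c) \<longleftrightarrow> P 0 \<or> (\<exists>c<n. P (Suc c))"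
  by (auto simp: less_Suc_eq_0_disj)

lemma build_sub: "build R T \<subseteq> boxesL (L#cl) \<longleftrightarrow> (\<forall>r\<in>R. r < L) \<and> T \<subseteq> boxesL cl"
  by (auto simp: build_def)

lemma badrow_build:
  "badrow (L#cl) (build R T) a \<longleftrightarrow> badrow cl T a \<or> (a < L \<and> a \<notin> R \<and> (\<exists>r'<a. r' \<in> R))"
  unfolding badrow_def by (subst ex_nat_split) auto

lemma cond3_build:
  "(\<forall>r c. (r, c) \<in> boxesL (L#cl) \<and> (r, c) \<notin> build R T \<longrightarrow>
        \<not> ((\<exists>r' < r. (r', c) \<in> build R T) \<and> (\<exists>c' < c. (r, c') \<in> build R T)))
   \<longleftrightarrow> (\<forall>r c. (r, c) \<in> boxesL cl \<and> (r, c) \<notin> T \<longrightarrow>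
        \<not> ((\<exists>r' < r. (r', c) \<in> T) \<and> (\<exists>c' < c. (r, c') \<in> T))) \<and> (\<forall>r\<in>R. \<not> badrow cl T r)"
  (is "?L \<longleftrightarrow> ?R1 \<and> ?R2")
proof
  assume L: ?L
  show "?R1 \<and> ?R2"
  proof
    show ?R1
    proof (intro allI impI notI)
      fix r c assume a: "(r, c) \<in> boxesL cl \<and> (r, c) \<notin> T"
        and b: "(\<exists>r' < r. (r', c) \<in> T) \<and> (\<exists>c' < c. (r, c') \<in> T)"
      then obtain r' c' where "r' < r" "(r', c) \<in> T" "c' < c" "(r, c') \<in> T" by blast
      then show False using L[rule_format, of r "Suc c"] a
        by (metis Suc_mono boxes_ConsS build_memS)
    qed
    show ?R2
    proof (intro ballI notI)
      fix r assume r: "r \<in> R" and "badrow cl T r"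
      then obtain c r' where "(r, c) \<in> boxesL cl" "(r, c) \<notin> T" "r' < r" "(r', c) \<in> T"
        unfolding badrow_def by blast
      then show False using L[rule_format, of r "Suc c"] r
        by (metis zero_less_Suc boxes_ConsS build_memS build_mem0)
    qed
  qed
next
  assume R: "?R1 \<and> ?R2"
  show ?L
  proof (intro allI impI notI)
    fix r c assume a: "(r, c) \<in> boxesL (L#cl) \<and> (r, c) \<notin> build R T"
      and b: "(\<exists>r' < r. (r', c) \<in> build R T) \<and> (\<exists>c' < c. (r, c') \<in> build R T)"
    then obtain r' c' where r': "r' < r" "(r', c) \<in> build R T" and c': "c' < c" "(r, c') \<in> build R T"
      by blast
    then obtain c0 where c0: "c = Suc c0" using not0_implies_Suc by force
    have a': "(r, c0) \<in> boxesL cl" "(r, c0) \<notin> T" "(r', c0) \<in> T" using a r' c0 by auto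
    show False
    proof (cases c')
      case 0
      then have "r \<in> R" using c' by simp
      moreover have "badrow cl T r" unfolding badrow_def using a' r' by blast
      ultimately show False using R by blast
    next
      case (Suc c1)
      then have "(r, c1) \<in> T" "c1 < c0" using c' c0 by auto
      then show False using R a' r' by blast
    qed
  qed
qed

lemma ptL_build: "ptL (L#cl) (build R T) \<longleftrightarrow> ptL cl T \<and> R \<noteq> {} \<and> R \<subseteq> Aset cl T L"
proof -
  have C1: "(\<forall>c<length (L#cl). \<exists>r. (r, c) \<in> build R T) \<longleftrightarrow> R \<noteq> {} \<and> (\<forall>c<length cl. \<exists>r. (r, c) \<in> T)"
    by (simp only: length_Cons all_lessSuc build_mem0 build_memS) auto
  show ?thesis
    unfolding ptL_def build_sub C1 cond3_build Aset_def by blast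
qed

lemma build_decomp: "S = build {r. (r, 0) \<in> S} {p. (fst p, Suc (snd p)) \<in> S}"
proof (intro set_eqI)
  fix x :: "nat \<times> nat"
  obtain r c where x: "x = (r, c)" by force
  show "x \<in> S \<longleftrightarrow> x \<in> build {r. (r, 0) \<in> S} {p. (fst p, Suc (snd p)) \<in> S}"
    unfolding x by (cases c) auto
qed

lemma build_inj: "build R T = build R' T' \<Longrightarrow> R = R' \<and> T = T'"
proof
  assume h: "build R T = build R' T'"
  show "R = R'" using h by (metis build_mem0 set_eqI)
  show "T = T'"
  proof (intro set_eqI)
    fix x :: "nat \<times> nat"
    obtain r c where "x = (r, c)" by force
    then show "x \<in> T \<longleftrightarrow> x \<in> T'" using h by (metis build_memS)
  qed
qed


lemma Aset_sub: "Aset cl T L \<subseteq> {..<L}"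
  by (auto simp: Aset_def)

lemma card_build:
  assumes "finite R" "finite T"
  shows "card (build R T) = card R + card T"
proof -
  have d: "(\<lambda>r. (r, 0::nat)) ` R \<inter> (\<lambda>(r, c). (r, Suc c)) ` T = {}" by auto
  have i1: "inj_on (\<lambda>r. (r, 0::nat)) R" by (auto simp: inj_on_def)
  have i2: "inj_on (\<lambda>(r, c). (r, Suc c)) T" by (auto simp: inj_on_def)
  show ?thesis unfolding build_def
    using assms d by (simp add: card_Un_disjoint card_image[OF i1] card_image[OF i2])
qed

lemma Aset_build:
  assumes "L \<le> N" "\<forall>c\<in>set cl. c \<le> L"
  shows "Aset (L#cl) (build R T) N = {a\<in>Aset cl T L. a \<in> R \<or> (\<forall>r\<in>R. a \<le> r)} \<union> {L..<N}"
proof (intro set_eqI)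
  fix a
  have nb: "a \<ge> L \<Longrightarrow> \<not> badrow cl T a"
    using assms(2) unfolding badrow_def boxesL_def by (auto dest!: nth_mem)
  show "a \<in> Aset (L#cl) (build R T) N \<longleftrightarrow> a \<in> {a\<in>Aset cl T L. a \<in> R \<or> (\<forall>r\<in>R. a \<le> r)} \<union> {L..<N}"
    unfolding Aset_def badrow_build using assms(1) nb by (cases "a < L") (auto simp: not_less)
qed

lemma Gen_Cons:
  assumes LN: "L \<le> N" and cl: "\<forall>c\<in>set cl. c \<le> L"
  shows "Gen N (L#cl) = X ^ (N - L) * Phi (Gen L cl)"
proof -
  define F where "F S = smult (Qc ^ (card S - length (L#cl))) (X ^ card (Aset (L#cl) S N))" for S
  define fib where "fib T = {R. R \<noteq> {} \<and> R \<subseteq> Aset cl T L}" for T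
  define Sig where "Sig = Sigma {T. ptL cl T} fib"
  have bij: "bij_betw (\<lambda>(T, R). build R T) Sig {S. ptL (L#cl) S}"
  proof (rule bij_betwI')
    fix x y assume "x \<in> Sig" "y \<in> Sig"
    then show "((case x of (T, R) \<Rightarrow> build R T) = (case y of (T, R) \<Rightarrow> build R T)) = (x = y)"
      using build_inj by (cases x, cases y) auto
  next
    fix x assume "x \<in> Sig"
    then show "(case x of (T, R) \<Rightarrow> build R T) \<in> {S. ptL (L#cl) S}"
      unfolding Sig_def fib_def by (auto simp: ptL_build)
  next
    fix S assume "S \<in> {S. ptL (L#cl) S}"
    then have "ptL (L#cl) (build {r. (r, 0) \<in> S} {p. (fst p, Suc (snd p)) \<in> S})"
      using build_decomp[of S] by simp
    then have "({p. (fst p, Suc (snd p)) \<in> S}, {r. (r, 0) \<in> S}) \<in> Sig"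
      unfolding Sig_def fib_def by (simp add: ptL_build)
    then show "\<exists>x\<in>Sig. S = (case x of (T, R) \<Rightarrow> build R T)"
      using build_decomp[of S] by force
  qed
  have finfib: "finite (fib T)" for T
  proof -
    have "fib T \<subseteq> Pow {..<L}" using Aset_sub unfolding fib_def by blast
    then show ?thesis by (rule finite_subset) simp
  qed
  have "Gen N (L#cl) = sum F {S. ptL (L#cl) S}" unfolding Gen_def F_def ..
  also have "\<dots> = (\<Sum>x\<in>Sig. F (case x of (T, R) \<Rightarrow> build R T))"
    by (rule sum.reindex_bij_betw[OF bij, symmetric])
  also have "\<dots> = (\<Sum>T\<in>{T. ptL cl T}. \<Sum>R\<in>fib T. F (build R T))"
    unfolding Sig_def using finite_pt finfib
    by (subst sum.Sigma) (auto simp: case_prod_unfold)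
  also have "\<dots> = (\<Sum>T\<in>{T. ptL cl T}. smult (Qc ^ (card T - length cl))
        (X ^ (N - L) * phi (card (Aset cl T L))))"
  proof (intro sum.cong refl)
    fix T assume T: "T \<in> {T. ptL cl T}"
    have fT: "finite T" using T ptL_finite by auto
    have cT: "length cl \<le> card T" using T ptL_card by auto
    have finA: "finite (Aset cl T L)" by (rule finite_subset[OF Aset_sub]) simp
    have "(\<Sum>R\<in>fib T. F (build R T)) = (\<Sum>R\<in>fib T. smult (Qc ^ (card T - length cl))
         (X ^ (N - L) * smult (Qc ^ (card R - 1)) (X ^ card {a\<in>Aset cl T L. a \<in> R \<or> (\<forall>r\<in>R. a \<le> r)})))"
    proof (intro sum.cong refl)
      fix R assume R: "R \<in> fib T"
      have "R \<subseteq> {..<L}" using R Aset_sub[of cl T L] unfolding fib_def by blast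
      then have fR: "finite R" by (rule finite_subset) simp
      have cR: "card R \<ge> 1" using R fR unfolding fib_def by (simp add: Suc_leI card_gt_0_iff)
      have e1: "card (build R T) - length (L#cl) = (card T - length cl) + (card R - 1)"
        using card_build[OF fR fT] cT cR by simp
      have fin1: "finite {a\<in>Aset cl T L. a \<in> R \<or> (\<forall>r\<in>R. a \<le> r)}"
        by (rule finite_subset[OF _ finA]) auto
      have "card (Aset (L#cl) (build R T) N) = card {a\<in>Aset cl T L. a \<in> R \<or> (\<forall>r\<in>R. a \<le> r)} + card {L..<N}"
        unfolding Aset_build[OF LN cl] using fin1 Aset_sub[of cl T L]
        by (intro card_Un_disjoint) auto
      then have e2: "card (Aset (L#cl) (build R T) N) = (N - L) + card {a\<in>Aset cl T L. a \<in> R \<or> (\<forall>r\<in>R. a \<le> r)}"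
        by simp
      show "F (build R T) = smult (Qc ^ (card T - length cl))
         (X ^ (N - L) * smult (Qc ^ (card R - 1)) (X ^ card {a\<in>Aset cl T L. a \<in> R \<or> (\<forall>r\<in>R. a \<le> r)}))"
        unfolding F_def e1 e2 by (simp add: power_add smult_smult mult.commute)
    qed
    also have "\<dots> = smult (Qc ^ (card T - length cl)) (X ^ (N - L) *
        (\<Sum>R\<in>fib T. smult (Qc ^ (card R - 1)) (X ^ card {a\<in>Aset cl T L. a \<in> R \<or> (\<forall>r\<in>R. a \<le> r)})))"
      by (simp add: smult_sum_right sum_distrib_left)
    also have "(\<Sum>R\<in>fib T. smult (Qc ^ (card R - 1)) (X ^ card {a\<in>Aset cl T L. a \<in> R \<or> (\<forall>r\<in>R. a \<le> r)}))
        = phi (card (Aset cl T L))"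
      unfolding fib_def using finA by (rule subset_sum)
    finally show "(\<Sum>R\<in>fib T. F (build R T)) = smult (Qc ^ (card T - length cl))
        (X ^ (N - L) * phi (card (Aset cl T L)))" .
  qed
  also have "\<dots> = X ^ (N - L) * Phi (Gen L cl)"
    unfolding Gen_def by (simp add: Phi_sum Phi_smult Phi_Xpow sum_distrib_left)
  finally show ?thesis .
qed


lemma Gen_Nil: "Gen N [] = X ^ N"
proof -
  have b: "boxesL [] = {}" by (simp add: boxesL_def)
  have "{S. ptL [] S} = {{}}" by (auto simp: ptL_def b)
  moreover have "Aset [] {} N = {..<N}" by (auto simp: Aset_def badrow_def b)
  ultimately show ?thesis by (simp add: Gen_def)
qed

lemma Gen_lift:
  assumes "sorted_wrt (\<ge>) cl" "\<forall>c\<in>set cl. c \<le> L" "L \<le> N"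
  shows "Gen N cl = X ^ (N - L) * Gen L cl"
proof (cases cl)
  case Nil
  then show ?thesis using assms by (simp add: Gen_Nil flip: power_add)
next
  case (Cons L' cl')
  have h: "L' \<le> L" "\<forall>c\<in>set cl'. c \<le> L'"
    using assms Cons by auto
  have "Gen N cl = X ^ (N - L') * Phi (Gen L' cl')"
    unfolding Cons using h assms by (intro Gen_Cons) auto
  also have "\<dots> = X ^ (N - L) * (X ^ (L - L') * Phi (Gen L' cl'))"
    using h assms by (simp add: mult.assoc flip: power_add)
  also have "X ^ (L - L') * Phi (Gen L' cl') = Gen L cl"
    unfolding Cons using h by (intro Gen_Cons[symmetric]) auto
  finally show ?thesis .
qed

lemma Gen_rep:
  assumes "\<forall>c\<in>set cl. c \<le> N"
  shows "Gen N (replicate m N @ cl) = (Phi ^^ m) (Gen N cl)"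
proof (induction m)
  case 0 then show ?case by simp
next
  case (Suc m)
  have "Gen N (replicate (Suc m) N @ cl) = X ^ (N - N) * Phi (Gen N (replicate m N @ cl))"
    unfolding replicate_Suc append_Cons using assms by (intro Gen_Cons) auto
  then show ?case using Suc by simp
qed

lemma colLens_Nil: "colLens [] = []"
  by (simp add: colLens_def)

lemma colLens_Cons: "colLens (i#J) = replicate (i-1) (Suc (length J)) @ colLens J"
  by (simp add: colLens_def upt_conv_Cons map_Suc_upt[symmetric] o_def del: upt_Suc)

lemma colLens_le: "\<forall>c\<in>set (colLens I). c \<le> length I"
  by (auto simp: colLens_def)

lemma sorted_rep: "sorted_wrt (\<ge>) (replicate n (x::nat))"
  by (induction n) auto

lemma colLens_sorted: "sorted_wrt (\<ge>) (colLens I)"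
proof (induction I)
  case Nil then show ?case by (simp add: colLens_Nil)
next
  case (Cons i J)
  have "\<forall>c\<in>set (colLens J). c \<le> length J" by (rule colLens_le)
  then show ?case using Cons
    by (auto simp: colLens_Cons sorted_wrt_append sorted_rep)
qed

lemma Gen_G: "\<forall>x\<in>set I. 0 < x \<Longrightarrow> Gen (length I) (colLens I) = G I"
proof (induction I)
  case Nil then show ?case by (simp add: colLens_Nil Gen_Nil)
next
  case (Cons i J)
  let ?n = "length J"
  have le: "\<forall>c\<in>set (colLens J). c \<le> ?n" by (rule colLens_le)
  have "Gen (length (i#J)) (colLens (i#J)) = (Phi ^^ (i-1)) (Gen (Suc ?n) (colLens J))"
    unfolding colLens_Cons length_Cons using le by (intro Gen_rep) auto
  also have "Gen (Suc ?n) (colLens J) = X ^ (Suc ?n - ?n) * Gen ?n (colLens J)"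
    using le colLens_sorted by (intro Gen_lift) auto
  finally show ?case using Cons by simp
qed

lemma PT_alt: "PT I = (\<Sum>S\<in>{S. ptL (colLens I) S}. monom 1 (card S - length (colLens I)))"
proof -
  have "perm_tableau I S = ptL (colLens I) S" for S
    by (simp add: perm_tableau_def ptL_def boxes_def boxesL_def ncols_def)
  then show ?thesis by (simp add: PT_def tableaux_def tab_rank_def ncols_def)
qed

lemma PT_Gen: "PT I = poly (Gen (length I) (colLens I)) 1"
  by (simp add: PT_alt Gen_def poly_sum Qc_def monom_power X_def poly_monom)


lemma merge_pos:
  assumes "\<forall>x\<in>set I. 0 < x" "k \<in> {1..<length I}"
  shows "\<forall>x\<in>set (merge_at I k). 0 < x"
proof -
  have "I ! (k-1) \<in> set I" using assms(2) by auto
  then have "0 < I ! (k-1)" using assms(1) by auto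
  then show ?thesis unfolding merge_at_def using assms(1)
    by (auto dest: in_set_takeD in_set_dropD)
qed

lemma PT_G: "\<forall>x\<in>set I. 0 < x \<Longrightarrow> PT I = poly (G I) 1"
  by (simp add: PT_Gen Gen_G)

theorem mainTheorem13:
  fixes I :: "nat list"
  assumes "is_composition I"
  shows "PT (1 # I) = PT I
     \<and> PT ((1 + hd I) # tl I)
         = qint (length I) * PT I
           + (\<Sum>k\<in>{1..<length I}. monom 1 (k - 1) * PT (merge_at I k))"
proof
  show "PT (1 # I) = PT I"
    by (simp add: PT_alt colLens_Cons)
next
  have pos: "\<forall>x\<in>set I. 0 < x" and ne: "I \<noteq> []" using assms by (auto simp: is_composition_def)
  obtain i J where IJ: "I = i # J" using ne by (cases I) auto
  have i1: "i \<ge> 1" using pos IJ by auto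
  have pos': "\<forall>x\<in>set ((1 + hd I) # tl I). 0 < x" using pos IJ by auto
  have "G ((1 + hd I) # tl I) = (Phi ^^ Suc (i - 1)) (X * G J)"
    using IJ i1 by simp
  also have "\<dots> = Phi (G I)" using IJ by simp
  finally have eq: "G ((1 + hd I) # tl I) = Phi (G I)" .
  have "PT ((1 + hd I) # tl I) = poly (Phi (G I)) 1"
    using PT_G[OF pos'] eq by simp
  also have "\<dots> = qint (length I) * poly (G I) 1
      + (\<Sum>k\<in>{1..<length I}. monom 1 (k - 1) * poly (G (merge_at I k)) 1)"
    by (simp add: main_alg[OF pos] poly_sum)
  also have "\<dots> = qint (length I) * PT I
      + (\<Sum>k\<in>{1..<length I}. monom 1 (k - 1) * PT (merge_at I k))"
    using PT_G[OF pos] PT_G[OF merge_pos[OF pos]] by simp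
  finally show "PT ((1 + hd I) # tl I) = qint (length I) * PT I
      + (\<Sum>k\<in>{1..<length I}. monom 1 (k - 1) * PT (merge_at I k))" .
qed

end
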